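(* Let $A:\mathbb{R}\to M_{p\times p}(\mathbb{R})$ and $B,C:\mathbb{R}\to\mathbb{R}^p$, and let $\{Y_N(t)\}_{N\in\mathbb{N}}$ be the associated sequence of time-varying linear state space processes. Suppose (C1) $A,B,C$ are continuous; (C2) $\|B(s)\|<\infty$ for all $s\in\mathbb{R}$ and $\sup_{s\in\mathbb{R}}\|C(s)\|<\infty$; (C3) for every $t\in\mathbb{R}$ there is a real function $F_t\in L^2((-\infty,0])$ with $\|\Psi^0_{N,t}(0,u)\|\le F_t(u)$ for all $u\le0$ and all $N\in\mathbb{N}$. Then $\{Y_N(t)\}$ is locally stationary (with kernels $g_N^0$ and limiting kernel $g$ as below).
   Context: $L$ is a two-sided real Lévy process ($L(t)=L_1(t)\mathbb{1}_{\{t\ge0\}}-L_2(-t)\mathbb{1}_{\{t<0\}}$, $L_1,L_2$ independent copies of a Lévy process) with $E[L(1)]=0$, $E[L(1)^2]<\infty$. For fixed $t\in\mathbb{R}$, $N\in\mathbb{N}$, $\Psi^0_{N,t}(s,s_0)$ denotes the solution of $\Psi^0_{N,t}(s_0,s_0)=\mathbf{1}_p$, $\frac{d}{ds}\Psi^0_{N,t}(s,s_0)=A(\tfrac{s}{N}+t)\Psi^0_{N,t}(s,s_0)$, and $\Psi_t(s,s_0)=e^{A(t)(s-s_0)}$ is the solution of $\Psi_t(s_0,s_0)=\mathbf{1}_p$, $\frac{d}{ds}\Psi_t(s,s_0)=A(t)\Psi_t(s,s_0)$. The sequence of time-varying linear state space processes is $Y_N(t)=\int_{\mathbb{R}}\mathbb{1}_{\{Nt-u\ge0\}}B(t)'\Psi^0_{N,t}(0,-(Nt-u))C(\tfrac{u}{N})\,L(du)$,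 i.e. $Y_N(t)=\int g_N^0(Nt,Nt-u)L(du)$ with kernel $g_N^0(Nt,v)=\mathbb{1}_{\{v\ge0\}}B(t)'\Psi^0_{N,t}(0,-v)C(t-\tfrac{v}{N})$, and the limiting kernel is $g(t,v)=\mathbb{1}_{\{v\ge0\}}B(t)'\Psi_t(0,-v)C(t)$. A sequence $\{Y_N(t)\}$ is locally stationary if $Y_N(t)=\int_{\mathbb{R}}g_N^0(Nt,Nt-u)L(du)$ for all $t,N$ with $g_N^0(Nt,\cdot)\in L^2(\mathbb{R})$ and there is a limiting kernel $g:\mathbb{R}^2\to\mathbb{R}$ with $t\mapsto g(t,\cdot)$ continuous into $L^2(\mathbb{R})$ and $g_N^0(Nt,\cdot)\to g(t,\cdot)$ in $L^2(\mathbb{R})$ for every $t$. *)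

theory Defs
  imports "HOL-Analysis.Analysis"
begin

definition L2_real :: "(real \<Rightarrow> real) \<Rightarrow> bool" where
  "L2_real f \<longleftrightarrow> f \<in> borel_measurable lborel \<and> integrable lborel (\<lambda>x. (f x)\<^sup>2)"

definition L2_dist_sq :: "(real \<Rightarrow> real) \<Rightarrow> (real \<Rightarrow> real) \<Rightarrow> real" where
  "L2_dist_sq f h = (LINT x|lborel. (f x - h x)\<^sup>2)"

text \<open>Local stationarity, stated on the kernels: gN N t v stands for g_N^0(Nt, v),
  g t v for the limiting kernel g(t,v). N ranges over the positive naturals.\<close>
definition locally_stationary_kernels ::
  "(nat \<Rightarrow> real \<Rightarrow> real \<Rightarrow> real) \<Rightarrow> (real \<Rightarrow> real \<Rightarrow> real) \<Rightarrow> bool" where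
  "locally_stationary_kernels gN g \<longleftrightarrow>
     (\<forall>N t. N \<ge> 1 \<longrightarrow> L2_real (gN N t)) \<and>
     (\<forall>t. L2_real (g t)) \<and>
     (\<forall>t. ((\<lambda>s. L2_dist_sq (g s) (g t)) \<longlongrightarrow> 0) (at t)) \<and>
     (\<forall>t. (\<lambda>N. L2_dist_sq (gN N t) (g t)) \<longlonglongrightarrow> 0)"

definition tv_kernel ::
  "(real \<Rightarrow> real^'p) \<Rightarrow> (real \<Rightarrow> real^'p) \<Rightarrow>
   (nat \<Rightarrow> real \<Rightarrow> real \<Rightarrow> real \<Rightarrow> real^'p^'p) \<Rightarrow> nat \<Rightarrow> real \<Rightarrow> real \<Rightarrow> real" where
  "tv_kernel B C Psi0 N t v =
     (if v \<ge> 0 then B t \<bullet> (Psi0 N t 0 (- v) *v C (t - v / real N)) else 0)"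

definition lim_kernel ::
  "(real \<Rightarrow> real^'p) \<Rightarrow> (real \<Rightarrow> real^'p) \<Rightarrow>
   (real \<Rightarrow> real \<Rightarrow> real \<Rightarrow> real^'p^'p) \<Rightarrow> real \<Rightarrow> real \<Rightarrow> real" where
  "lim_kernel B C Psi t v =
     (if v \<ge> 0 then B t \<bullet> (Psi t 0 (- v) *v C t) else 0)"

end

theory Submission
  imports Defs
begin

lemma norm_sq_vec: "(norm (x::real^'n))^2 = (\<Sum>i\<in>UNIV. (x$i)^2)"
  unfolding power2_norm_eq_inner inner_vec_def by (simp add: power2_eq_square)

lemma norm_sq_mat: "(norm (M::real^'n^'m))^2 = (\<Sum>i\<in>UNIV. (norm (M$i))^2)"
  by (simp add: power2_norm_eq_inner inner_vec_def)

lemma norm_mv: "norm ((A::real^'n^'m) *v x) \<le> norm A * norm x"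
proof -
  have "(norm (A *v x))^2 = (\<Sum>i\<in>UNIV. (A$i \<bullet> x)^2)"
    by (simp add: norm_sq_vec matrix_mult_dot)
  also have "\<dots> \<le> (\<Sum>i\<in>UNIV. (norm (A$i) * norm x)^2)"
  proof (rule sum_mono)
    fix i
    have "\<bar>A$i \<bullet> x\<bar> \<le> norm (A$i) * norm x" by (rule Cauchy_Schwarz_ineq2)
    then show "(A$i \<bullet> x)^2 \<le> (norm (A$i) * norm x)^2"
      by (metis abs_ge_zero power2_abs power_mono)
  qed
  also have "\<dots> = (norm A * norm x)^2"
    by (simp add: norm_sq_mat power_mult_distrib sum_distrib_right)
  finally show ?thesis
    by (meson mult_nonneg_nonneg norm_ge_zero power2_le_imp_le)
qed

lemma norm_transpose_sq: "(norm (transpose (M::real^'n^'m)))^2 = (norm M)^2"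
  apply (simp add: norm_sq_mat norm_sq_vec transpose_def)
  by (rule sum.swap)

lemma norm_transpose: "norm (transpose (M::real^'n^'m)) = norm M"
  using norm_transpose_sq[of M] by (simp add: power2_eq_iff_nonneg)

lemma norm_mm: "norm ((A::real^'n^'m) ** (B::real^'k^'n)) \<le> norm A * norm B"
proof -
  have row: "(A ** B) $ i = transpose B *v (A $ i)" for i
    by (simp add: vec_eq_iff matrix_matrix_mult_def matrix_vector_mult_def transpose_def mult.commute)
  have "(norm (A ** B))^2 = (\<Sum>i\<in>UNIV. (norm ((A ** B)$i))^2)" by (rule norm_sq_mat)
  also have "\<dots> \<le> (\<Sum>i\<in>UNIV. (norm B * norm (A$i))^2)"
  proof (rule sum_mono)
    fix i
    have "norm ((A ** B)$i) \<le> norm B * norm (A$i)"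
      using norm_mv[of "transpose B" "A$i"] by (simp add: row norm_transpose)
    then show "(norm ((A ** B)$i))^2 \<le> (norm B * norm (A$i))^2"
      by (simp add: power_mono)
  qed
  also have "\<dots> = (norm A * norm B)^2"
    by (simp add: norm_sq_mat[of A] power_mult_distrib sum_distrib_left[symmetric] mult.commute)
  finally show ?thesis
    by (meson mult_nonneg_nonneg norm_ge_zero power2_le_imp_le)
qed


lemma mm_diff_left: "((A::real^'n^'m) - B) ** (C::real^'k^'n) = A ** C - B ** C"
  by (vector matrix_matrix_mult_def sum_subtractf[symmetric] field_simps)
lemma mm_diff_right: "(A::real^'n^'m) ** ((B::real^'k^'n) - C) = A ** B - A ** C"
  by (vector matrix_matrix_mult_def sum_subtractf[symmetric] field_simps)

lemma phi_deriv:
  fixes D :: "real \<Rightarrow> real^'n^'m"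
  assumes "(D has_vector_derivative D') (at s)"
  shows "((\<lambda>s. D s \<bullet> D s) has_real_derivative (2 * (D s \<bullet> D'))) (at s)"
proof -
  have "(D has_derivative (\<lambda>h. h *\<^sub>R D')) (at s)" using assms by (simp add: has_vector_derivative_def)
  from has_derivative_inner[OF this this]
  have "((\<lambda>s. D s \<bullet> D s) has_derivative (\<lambda>h. D s \<bullet> (h *\<^sub>R D') + (h *\<^sub>R D') \<bullet> D s)) (at s)" .
  moreover have "(\<lambda>h. D s \<bullet> (h *\<^sub>R D') + (h *\<^sub>R D') \<bullet> D s) = (\<lambda>h. (2 * (D s \<bullet> D')) * h)"
    by (auto simp: inner_commute algebra_simps)
  ultimately show ?thesis by (simp add: has_field_derivative_def)
qed

lemma gron:
  fixes X Y M L :: "real \<Rightarrow> real^'n^'n"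
  assumes ab: "a \<le> b"
  and dX: "\<And>s. s \<in> {a..b} \<Longrightarrow> (X has_vector_derivative (M s ** X s)) (at s)"
  and dY: "\<And>s. s \<in> {a..b} \<Longrightarrow> (Y has_vector_derivative (L s ** Y s)) (at s)"
  and K: "\<And>s. s \<in> {a..b} \<Longrightarrow> norm (M s) \<le> K"
  and E: "\<And>s. s \<in> {a..b} \<Longrightarrow> norm ((M s - L s) ** Y s) \<le> E"
  shows "(norm (X b - Y b))^2 \<le> exp ((2*K+1)*(b-a)) * ((norm (X a - Y a))^2 + E^2*(b-a))"
proof -
  define c where "c = 2*K+1"
  have K0: "0 \<le> K" using K[of a] ab by (meson atLeastAtMost_iff norm_ge_zero order.trans order_refl)
  have c0: "0 \<le> c" using K0 by (simp add: c_def)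
  define D where "D s = X s - Y s" for s
  define D' where "D' s = M s ** D s + (M s - L s) ** Y s" for s
  define phi where "phi s = D s \<bullet> D s" for s
  have dD: "(D has_vector_derivative D' s) (at s)" if "s \<in> {a..b}" for s
  proof -
    have "(D has_vector_derivative (M s ** X s - L s ** Y s)) (at s)"
      unfolding D_def by (intro has_vector_derivative_diff dX dY that)
    moreover have "M s ** X s - L s ** Y s = D' s"
      by (simp add: D'_def D_def mm_diff_left mm_diff_right)
    ultimately show ?thesis by simp
  qed
  have phi_nn: "phi s = (norm (D s))^2" for s by (simp add: phi_def power2_norm_eq_inner)
  have dphi: "(phi has_real_derivative (2 * (D s \<bullet> D' s))) (at s)" if "s \<in> {a..b}" for s
    unfolding phi_def by (rule phi_deriv[OF dD[OF that]])
  have dphi_le: "2 * (D s \<bullet> D' s) \<le> c * phi s + E^2" if s: "s \<in> {a..b}" for s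
  proof -
    have "D s \<bullet> D' s = D s \<bullet> (M s ** D s) + D s \<bullet> ((M s - L s) ** Y s)"
      by (simp add: D'_def inner_add_right)
    also have "\<dots> \<le> norm (D s) * norm (M s ** D s) + norm (D s) * norm ((M s - L s) ** Y s)"
      by (intro add_mono norm_cauchy_schwarz)
    also have "\<dots> \<le> norm (D s) * (K * norm (D s)) + norm (D s) * E"
    proof (intro add_mono mult_left_mono)
      show "norm (M s ** D s) \<le> K * norm (D s)"
        using norm_mm[of "M s" "D s"] K[OF s] by (meson mult_right_mono norm_ge_zero order_trans)
    qed (use E[OF s] in auto)
    finally have "D s \<bullet> D' s \<le> K * (norm (D s))^2 + norm (D s) * E" by (simp add: power2_eq_square algebra_simps)
    moreover have "2 * (norm (D s) * E) \<le> (norm (D s))^2 + E^2"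
      using sum_squares_bound[of "norm (D s)" E] by (simp add: power2_eq_square algebra_simps)
    ultimately show ?thesis by (simp add: c_def phi_nn algebra_simps)
  qed
  define h where "h s = exp (- c * (s - a)) * phi s - E^2 * (s - a)" for s
  have "h b \<le> h a"
  proof (rule DERIV_nonpos_imp_nonincreasing[OF ab])
    fix s assume s1: "a \<le> s" "s \<le> b"
    then have s: "s \<in> {a..b}" by simp
    have "(h has_real_derivative
      (exp (- c * (s - a)) * (- c) * phi s + exp (- c * (s - a)) * (2 * (D s \<bullet> D' s)) - E^2)) (at s)"
      unfolding h_def
      by (auto intro!: derivative_eq_intros dphi[OF s])
    moreover have "exp (- c * (s - a)) * (- c) * phi s + exp (- c * (s - a)) * (2 * (D s \<bullet> D' s)) - E^2 \<le> 0"
    proof -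
      have ex1: "exp (- c * (s - a)) \<le> 1" using c0 s1 by (simp add: mult_nonneg_nonneg)
      have "exp (- c * (s - a)) * (- c) * phi s + exp (- c * (s - a)) * (2 * (D s \<bullet> D' s))
          = exp (- c * (s - a)) * (2 * (D s \<bullet> D' s) - c * phi s)" by (simp add: algebra_simps)
      also have "\<dots> \<le> exp (- c * (s - a)) * E^2"
        using dphi_le[OF s] by (intro mult_left_mono) auto
      also have "\<dots> \<le> E^2" using ex1 by (simp add: mult_left_le_one_le)
      finally show ?thesis by simp
    qed
    ultimately show "\<exists>y. (h has_real_derivative y) (at s) \<and> y \<le> 0" by blast
  qed
  then have "exp (- c * (b - a)) * phi b \<le> phi a + E^2 * (b - a)" by (simp add: h_def)
  then have "exp (c * (b - a)) * (exp (- c * (b - a)) * phi b) \<le> exp (c * (b - a)) * (phi a + E^2 * (b - a))"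
    by (intro mult_left_mono) auto
  then have "phi b \<le> exp (c * (b - a)) * (phi a + E^2 * (b - a))"
    by (simp add: mult.assoc[symmetric] exp_add[symmetric])
  then show ?thesis by (simp add: phi_nn D_def c_def)
qed


lemma mm_scaleR_left: "(c *\<^sub>R (A::real^'n^'m)) ** (C::real^'k^'n) = c *\<^sub>R (A ** C)"
  by (vector matrix_matrix_mult_def sum_distrib_left field_simps)
lemma mm_add_left: "((A::real^'n^'m) + B) ** (C::real^'k^'n) = A ** C + B ** C"
  by (vector matrix_matrix_mult_def sum.distrib[symmetric] field_simps)

lemma deriv_mult_right:
  fixes F :: "real \<Rightarrow> real^'n^'m" and C :: "real^'k^'n"
  assumes "(F has_vector_derivative F') (at s)"
  shows "((\<lambda>x. F x ** C) has_vector_derivative (F' ** C)) (at s)"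
proof -
  have bl: "bounded_linear (\<lambda>Z::real^'n^'m. Z ** C)"
    by (rule bounded_linearI') (simp_all add: mm_add_left mm_scaleR_left)
  have "(F has_derivative (\<lambda>h. h *\<^sub>R F')) (at s)" using assms by (simp add: has_vector_derivative_def)
  from bounded_linear.has_derivative[OF bl this]
  show ?thesis by (simp add: has_vector_derivative_def mm_scaleR_left)
qed

lemma cont_bound:
  fixes M :: "real \<Rightarrow> 'a::real_normed_vector"
  assumes "continuous_on UNIV M"
  shows "\<exists>K. \<forall>s\<in>{a..b}. norm (M s) \<le> K"
proof -
  have "compact (M ` {a..b})" by (rule compact_continuous_image) (use assms continuous_on_subset in auto)
  then have "bounded (M ` {a..b})" by (rule compact_imp_bounded)
  then show ?thesis by (auto simp: bounded_iff)
qed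

definition is_flow :: "(real \<Rightarrow> real^'n^'n) \<Rightarrow> (real \<Rightarrow> real \<Rightarrow> real^'n^'n) \<Rightarrow> bool" where
  "is_flow M X \<longleftrightarrow> continuous_on UNIV M \<and> (\<forall>u. X u u = mat 1) \<and>
     (\<forall>s u. ((\<lambda>s. X s u) has_vector_derivative (M s ** X s u)) (at s))"

lemma flowD:
  assumes "is_flow M X"
  shows "X u u = mat 1" "((\<lambda>s. X s u) has_vector_derivative (M s ** X s u)) (at s)" "continuous_on UNIV M"
  using assms by (auto simp: is_flow_def)

lemma flow_growth:
  fixes X :: "real \<Rightarrow> real \<Rightarrow> real^'n^'n"
  assumes fl: "is_flow M X" and us: "u \<le> s" and K: "\<And>\<sigma>. \<sigma> \<in> {u..s} \<Longrightarrow> norm (M \<sigma>) \<le> K"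
  shows "(norm (X s u))^2 \<le> exp ((2*K+1)*(s-u)) * (norm (mat 1 :: real^'n^'n))^2"
proof -
  have "(norm (X s u - (\<lambda>_. 0::real^'n^'n) s))^2 \<le> exp ((2*K+1)*(s-u)) * ((norm (X u u - (\<lambda>_. 0) u))^2 + 0^2*(s-u))"
    apply (rule gron[where M=M and L=M and X="\<lambda>s. X s u" and Y="\<lambda>_. 0"])
        apply (rule us)
       apply (rule flowD(2)[OF fl])
      apply simp
     apply (erule K)
    apply simp
    done
  then show ?thesis using flowD[OF fl] by simp
qed

lemma flow_id:
  fixes X :: "real \<Rightarrow> real \<Rightarrow> real^'n^'n"
  assumes fl: "is_flow M X" and us: "u \<le> s" and K: "\<And>\<sigma>. \<sigma> \<in> {u..s} \<Longrightarrow> norm (M \<sigma>) \<le> K"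
  shows "(norm (X s u - mat 1))^2 \<le> exp ((2*K+1)*(s-u)) * (K^2*(s-u))"
proof -
  have "(norm (X s u - (\<lambda>_. mat 1::real^'n^'n) s))^2 \<le> exp ((2*K+1)*(s-u)) * ((norm (X u u - (\<lambda>_. mat 1) u))^2 + K^2*(s-u))"
    apply (rule gron[where M=M and L="\<lambda>_. 0" and X="\<lambda>s. X s u" and Y="\<lambda>_. mat 1"])
        apply (rule us)
       apply (rule flowD(2)[OF fl])
      apply simp
     apply (erule K)
    apply (simp add: K)
    done
  then show ?thesis using flowD[OF fl] by simp
qed

lemma flow_lip:
  assumes fl: "is_flow M X" and pq: "p \<le> q" "q \<le> b" and K: "\<And>\<sigma>. \<sigma> \<in> {p..b} \<Longrightarrow> norm (M \<sigma>) \<le> K"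
  shows "(norm (X b q - X b p))^2 \<le> exp ((2*K+1)*(b-p)) * (K^2*(q-p))"
proof -
  have h1: "(norm (X b q - X b p))^2 \<le> exp ((2*K+1)*(b-q)) * ((norm (X q q - X q p))^2 + 0^2*(b-q))"
    apply (rule gron[where M=M and L=M and X="\<lambda>s. X s q" and Y="\<lambda>s. X s p"])
        apply (rule pq)
       apply (rule flowD(2)[OF fl])
      apply (rule flowD(2)[OF fl])
     apply (rule K) using pq apply simp
    apply simp
    done
  have e: "(norm (X q q - X q p))^2 = (norm (X q p - mat 1))^2"
    using flowD(1)[OF fl, of q] by (simp add: norm_minus_commute)
  have h2: "(norm (X q p - mat 1))^2 \<le> exp ((2*K+1)*(q-p)) * (K^2*(q-p))"
    by (rule flow_id[OF fl pq(1)]) (use pq K in auto)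
  have h3: "(norm (X b q - X b p))^2 \<le> exp ((2*K+1)*(b-q)) * (exp ((2*K+1)*(q-p)) * (K^2*(q-p)))"
  proof -
    have "(norm (X b q - X b p))^2 \<le> exp ((2*K+1)*(b-q)) * (norm (X q p - mat 1))^2"
      using h1 e by simp
    also have "\<dots> \<le> exp ((2*K+1)*(b-q)) * (exp ((2*K+1)*(q-p)) * (K^2*(q-p)))"
      by (rule mult_left_mono[OF h2]) simp
    finally show ?thesis .
  qed
  have h4: "exp ((2*K+1)*(b-q)) * exp ((2*K+1)*(q-p)) = exp ((2*K+1)*(b-p))"
    by (subst exp_add[symmetric]) (simp add: algebra_simps)
  show ?thesis using h3 h4 by (simp add: mult.assoc[symmetric])
qed


lemma flow_comp:
  assumes fl: "is_flow M X" and uw: "u \<le> w" "w \<le> b"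
  shows "X b u = X b w ** X w u"
proof -
  obtain K where K: "\<forall>s\<in>{w..b}. norm (M s) \<le> K" using cont_bound flowD(3)[OF fl] by blast
  have "(norm (X b u - X b w ** X w u))^2 \<le> exp ((2*K+1)*(b-w)) * ((norm (X w u - X w w ** X w u))^2 + 0^2*(b-w))"
    apply (rule gron[where M=M and L=M and X="\<lambda>s. X s u" and Y="\<lambda>s. X s w ** X w u"])
        apply (rule uw)
       apply (rule flowD(2)[OF fl])
    subgoal for s
      using deriv_mult_right[OF flowD(2)[OF fl, of w s], of "X w u"] by (simp add: matrix_mul_assoc)
     using K apply simp
    apply simp
    done
  then show ?thesis using flowD(1)[OF fl, of w] by simp
qed

lemma flow_cont:
  assumes fl: "is_flow M X"
  shows "continuous_on {..b} (\<lambda>u. X b u)"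
unfolding continuous_on_iff
proof (intro ballI allI impI)
  fix u0 e :: real assume u0': "u0 \<in> {..b}" and e: "0 < e"
  then have u0: "u0 \<le> b" by simp
  obtain K where K: "\<forall>s\<in>{u0-1..b}. norm (M s) \<le> K" using cont_bound flowD(3)[OF fl] by blast
  have "norm (M u0) \<le> K" using K u0 by auto
  then have K0: "0 \<le> K" by (meson norm_ge_zero order_trans)
  define C where "C = exp ((2*K+1)*(b-(u0-1))) * K^2 + 1"
  have C0: "0 < C" unfolding C_def by (intro add_nonneg_pos mult_nonneg_nonneg) auto
  have bnd: "(norm (X b u - X b u0))^2 \<le> C * \<bar>u - u0\<bar>" if "u \<le> b" "\<bar>u - u0\<bar> < 1" for u
  proof -
    have ex: "exp ((2*K+1)*(b-p)) \<le> exp ((2*K+1)*(b-(u0-1)))" if "u0 - 1 \<le> p" for p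
      using that K0 by (intro exp_le_cancel_iff[THEN iffD2] mult_left_mono) auto
    show ?thesis
    proof (cases "u \<le> u0")
      case True
      have "(norm (X b u0 - X b u))^2 \<le> exp ((2*K+1)*(b-u)) * (K^2*(u0-u))"
        by (rule flow_lip[OF fl True u0]) (use K that in auto)
      also have "\<dots> \<le> exp ((2*K+1)*(b-(u0-1))) * (K^2*(u0-u))"
        using ex[of u] that True by (intro mult_right_mono) auto
      also have "\<dots> \<le> C * \<bar>u - u0\<bar>" using True by (simp add: C_def algebra_simps)
      finally show ?thesis by (simp add: norm_minus_commute)
    next
      case False
      have "(norm (X b u - X b u0))^2 \<le> exp ((2*K+1)*(b-u0)) * (K^2*(u-u0))"
        by (rule flow_lip[OF fl _ that(1)]) (use K that False in auto)
      also have "\<dots> \<le> exp ((2*K+1)*(b-(u0-1))) * (K^2*(u-u0))"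
        using ex[of u0] that False by (intro mult_right_mono) auto
      also have "\<dots> \<le> C * \<bar>u - u0\<bar>" using False by (simp add: C_def algebra_simps)
      finally show ?thesis .
    qed
  qed
  define d where "d = min 1 (e^2 / C)"
  have d: "0 < d" using e C0 by (simp add: d_def)
  show "\<exists>d>0. \<forall>u\<in>{..b}. dist u u0 < d \<longrightarrow> dist (X b u) (X b u0) < e"
  proof (intro exI[of _ d] conjI d ballI impI)
    fix u assume u': "u \<in> {..b}" "dist u u0 < d"
    then have u: "u \<le> b" "dist u u0 < d" by auto
    then have u1: "\<bar>u - u0\<bar> < 1" and u2: "\<bar>u - u0\<bar> < e^2 / C" by (auto simp: d_def dist_real_def)
    have "C * \<bar>u - u0\<bar> < e^2" using u2 C0 by (simp add: pos_less_divide_eq mult.commute)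
    then have "(norm (X b u - X b u0))^2 < e^2"
      using bnd[OF u(1) u1] by linarith
    then show "dist (X b u) (X b u0) < e"
      by (simp add: dist_norm) (meson e less_le power_less_imp_less_base)
  qed
qed

lemma flow_shift:
  assumes fl: "is_flow (\<lambda>_. A0) X" and us: "u \<le> s"
  shows "X s u = X (s - u) 0"
proof -
  have "(norm (X s u - X (s - u) 0))^2 \<le> exp ((2*norm A0+1)*(s-u)) * ((norm (X u u - X (u - u) 0))^2 + 0^2*(s-u))"
    apply (rule gron[where M="\<lambda>_. A0" and L="\<lambda>_. A0" and X="\<lambda>s. X s u" and Y="\<lambda>s. X (s - u) 0"])
        apply (rule us)
       apply (rule flowD(2)[OF fl])
    subgoal for \<sigma>
    proof -
      have d1: "((\<lambda>\<sigma>. \<sigma> - u) has_vector_derivative 1) (at \<sigma>)"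
        by (auto intro!: derivative_eq_intros)
      have d2: "((\<lambda>s. X s 0) has_vector_derivative (A0 ** X (\<sigma> - u) 0)) (at (\<sigma> - u))"
        by (rule flowD(2)[OF fl])
      from vector_diff_chain_at[OF d1 d2]
      show ?thesis by (simp add: o_def)
    qed
     apply simp
    apply simp
    done
  then show ?thesis using flowD(1)[OF fl] by simp
qed

lemma flow_conv:
  assumes flX: "is_flow M X" and flY: "is_flow L Y" and ub: "u \<le> b"
    and K: "\<And>\<sigma>. \<sigma> \<in> {u..b} \<Longrightarrow> norm (M \<sigma>) \<le> K"
    and E: "\<And>\<sigma>. \<sigma> \<in> {u..b} \<Longrightarrow> norm (M \<sigma> - L \<sigma>) * norm (Y \<sigma> u) \<le> E"
  shows "(norm (X b u - Y b u))^2 \<le> exp ((2*K+1)*(b-u)) * (E^2*(b-u))"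
proof -
  have "(norm (X b u - Y b u))^2 \<le> exp ((2*K+1)*(b-u)) * ((norm (X u u - Y u u))^2 + E^2*(b-u))"
    apply (rule gron[where M=M and L=L and X="\<lambda>s. X s u" and Y="\<lambda>s. Y s u"])
        apply (rule ub)
       apply (rule flowD(2)[OF flX])
      apply (rule flowD(2)[OF flY])
     apply (erule K)
    subgoal for s using norm_mm[of "M s - L s" "Y s u"] E[of s] by linarith
    done
  then show ?thesis using flowD(1)[OF flX] flowD(1)[OF flY] by simp
qed


lemma inner_mv_bound: "\<bar>(x::real^'m) \<bullet> ((M::real^'n^'m) *v y)\<bar> \<le> norm x * norm M * norm y"
proof -
  have "\<bar>x \<bullet> (M *v y)\<bar> \<le> norm x * norm (M *v y)" by (rule Cauchy_Schwarz_ineq2)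
  also have "\<dots> \<le> norm x * (norm M * norm y)" by (intro mult_left_mono norm_mv) auto
  finally show ?thesis by (simp add: mult.assoc)
qed

lemma bb_mv: "bounded_bilinear ((*v) :: real^'n^'m \<Rightarrow> real^'n \<Rightarrow> real^'m)"
proof
  fix a a' :: "real^'n^'m" and b b' :: "real^'n" and r :: real
  show "(a + a') *v b = a *v b + a' *v b" by (vector matrix_vector_mult_def sum.distrib[symmetric] field_simps)
  show "a *v (b + b') = a *v b + a *v b'" by (vector matrix_vector_mult_def sum.distrib[symmetric] field_simps)
  show "(r *\<^sub>R a) *v b = r *\<^sub>R (a *v b)" by (vector matrix_vector_mult_def sum_distrib_left field_simps)
  show "a *v (r *\<^sub>R b) = r *\<^sub>R (a *v b)" by (vector matrix_vector_mult_def sum_distrib_left field_simps)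
next
  show "\<exists>K. \<forall>a b. norm ((a::real^'n^'m) *v b) \<le> norm a * norm b * K"
    by (rule exI[of _ 1]) (simp add: norm_mv)
qed

lemma tendsto_by_eps:
  fixes f :: "'a \<Rightarrow> 'b::real_normed_vector"
  assumes C: "0 \<le> Cst" and ev: "\<And>\<epsilon>. \<epsilon> > 0 \<Longrightarrow> eventually (\<lambda>N. norm (f N - l) \<le> Cst * \<epsilon>) F"
  shows "(f \<longlongrightarrow> l) F"
proof (rule tendstoI)
  fix e :: real assume e: "0 < e"
  define \<epsilon> where "\<epsilon> = e / (2 * (Cst + 1))"
  have \<epsilon>: "\<epsilon> > 0" using e C by (simp add: \<epsilon>_def)
  have lt: "Cst * \<epsilon> < e"
  proof -
    have "Cst * \<epsilon> \<le> (Cst + 1) * \<epsilon>" using \<epsilon> by (intro mult_right_mono) auto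
    also have "\<dots> = e / 2" using C by (simp add: \<epsilon>_def field_simps)
    finally show ?thesis using e by linarith
  qed
  show "eventually (\<lambda>N. dist (f N) l < e) F"
    using ev[OF \<epsilon>] by eventually_elim (use lt in \<open>simp add: dist_norm\<close>)
qed

lemma exp_integrable:
  assumes a: "0 < a"
  shows "integrable lborel (\<lambda>v::real. indicator {0..} v * exp (- a * v))"
proof -
  have "integrable lebesgue (\<lambda>x::real. indicator {0..} x *\<^sub>R exp (- a * x))"
    using a by (intro nonnegative_absolutely_integrable_1 [unfolded set_integrable_def] integrable_on_exp_minus_to_infinity) auto
  moreover have "(\<lambda>x::real. indicator {0..} x *\<^sub>R exp (- a * x)) \<in> borel_measurable lborel"
    by measurable
  ultimately show ?thesis by (simp add: integrable_completion)
qed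

lemma refl_integrable:
  fixes F :: "real \<Rightarrow> real"
  assumes "set_integrable lborel {..0} (\<lambda>u::real. (F u)\<^sup>2)"
  shows "integrable lborel (\<lambda>v. indicator {0..} v * (F (- v))\<^sup>2)"
proof -
  have "integrable lborel (\<lambda>u::real. indicator {..0} u * (F u)\<^sup>2)"
    using assms by (simp add: set_integrable_def real_scaleR_def)
  then have "integrable lborel (\<lambda>v::real. indicator {..0} (0 + (-1) * v) * (F (0 + (-1) * v))\<^sup>2)"
    using lborel_integrable_real_affine_iff[of "-1" "\<lambda>u. indicator {..0} u * (F u)\<^sup>2" 0] by simp
  moreover have "indicator {..0} (0 + (-1) * v) = (indicator {0..} v :: real)" for v :: real
    by (simp add: indicator_def)
  ultimately show ?thesis by simp
qed

lemma flow_bound: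
  assumes fl: "is_flow M X"
  shows "\<exists>R. \<forall>\<sigma>\<in>{u..b}. norm (X \<sigma> u) \<le> R"
proof (rule cont_bound)
  show "continuous_on UNIV (\<lambda>\<sigma>. X \<sigma> u)"
    by (rule continuous_at_imp_continuous_on)
       (use has_vector_derivative_continuous flowD(2)[OF fl] in blast)
qed

lemma norm_mat1: "1 \<le> norm (mat 1 :: real^'n^'n)"
proof -
  obtain i :: 'n where True by simp
  have "\<bar>(mat 1 :: real^'n^'n) $ i $ i\<bar> \<le> norm ((mat 1 :: real^'n^'n) $ i)" by (rule component_le_norm_cart)
  also have "\<dots> \<le> norm (mat 1 :: real^'n^'n)" by (rule Finite_Cartesian_Product.norm_nth_le)
  finally show ?thesis by (simp add: mat_def)
qed

lemma sq_bound_sqrt: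
  fixes x :: real
  assumes "x\<^sup>2 \<le> a * (E\<^sup>2 * w)" "0 \<le> a" "0 \<le> w" "0 \<le> E" "0 \<le> x"
  shows "x \<le> sqrt (a * w) * E"
proof -
  have "x\<^sup>2 \<le> (sqrt (a * w) * E)\<^sup>2" using assms by (simp add: power_mult_distrib algebra_simps)
  then show ?thesis using assms by (meson mult_nonneg_nonneg power2_le_imp_le real_sqrt_ge_zero)
qed


lemma cont_eps:
  assumes "continuous_on UNIV (A :: real \<Rightarrow> 'a::real_normed_vector)" "0 < \<epsilon>"
  shows "\<exists>\<delta>>0. \<forall>x. \<bar>x - t\<bar> < \<delta> \<longrightarrow> norm (A x - A t) < \<epsilon>"
  using assms unfolding continuous_on_iff by (auto simp: dist_norm)

lemma conv0:
  fixes A :: "real \<Rightarrow> real^'p^'p"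
  assumes fl0: "\<And>N. N \<ge> 1 \<Longrightarrow> is_flow (\<lambda>s. A (s / real N + t)) (Psi0 N t)"
    and fl: "is_flow (\<lambda>_. A t) (Psi t)" and cA: "continuous_on UNIV A" and u: "u \<le> 0"
  shows "(\<lambda>N. Psi0 N t 0 u) \<longlonglongrightarrow> Psi t 0 u"
proof -
  obtain K where K: "\<forall>x\<in>{t+u..t}. norm (A x) \<le> K" using cont_bound[OF cA] by blast
  obtain R where R: "\<forall>\<sigma>\<in>{u..0}. norm (Psi t \<sigma> u) \<le> R" using flow_bound[OF fl] by blast
  have R0: "0 \<le> R" using R u by (meson atLeastAtMost_iff norm_ge_zero order.trans order_refl)
  define Cst where "Cst = sqrt (exp ((2*K+1)*(0-u)) * (0-u)) * R"
  show ?thesis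
  proof (rule tendsto_by_eps[where Cst=Cst])
    show "0 \<le> Cst" unfolding Cst_def using u R0 by (intro mult_nonneg_nonneg real_sqrt_ge_zero) auto
  next
    fix \<epsilon> :: real assume e: "0 < \<epsilon>"
    obtain \<delta> where d: "\<delta> > 0" "\<And>x. \<bar>x - t\<bar> < \<delta> \<Longrightarrow> norm (A x - A t) < \<epsilon>"
      using cont_eps[OF cA e] by blast
    define N0 where "N0 = max 1 (nat \<lceil>- u / \<delta>\<rceil> + 1)"
    show "eventually (\<lambda>N. norm (Psi0 N t 0 u - Psi t 0 u) \<le> Cst * \<epsilon>) sequentially"
      unfolding eventually_sequentially
    proof (intro exI[of _ N0] allI impI)
      fix N assume N: "N0 \<le> N"
      then have N1: "N \<ge> 1" by (simp add: N0_def)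
      have "real N > - u / \<delta>"
      proof -
        have "- u / \<delta> \<le> real (nat \<lceil>- u / \<delta>\<rceil>)" by linarith
        also have "\<dots> < real N" using N by (simp add: N0_def)
        finally show ?thesis .
      qed
      then have Nd: "- u / real N < \<delta>" using d(1) N1 by (simp add: field_simps)
      have "(norm (Psi0 N t 0 u - Psi t 0 u))^2 \<le> exp ((2*K+1)*(0-u)) * ((\<epsilon>*R)^2*(0-u))"
      proof (rule flow_conv[OF fl0[OF N1] fl u])
        fix \<sigma> assume s: "\<sigma> \<in> {u..0}"
        have s1: "\<sigma> / real N \<le> 0" using s by (simp add: divide_nonpos_nonneg)
        have s2: "u \<le> \<sigma> / real N"
        proof -
          have "\<sigma> * real N \<le> \<sigma> * 1" using s N1 by (intro mult_left_mono_neg) auto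
          then have "\<sigma> \<le> \<sigma> / real N" using N1 by (simp add: le_divide_eq)
          then show ?thesis using s by simp
        qed
        show "norm (A (\<sigma> / real N + t)) \<le> K" using K s1 s2 by auto
        have "\<bar>\<sigma> / real N + t - t\<bar> < \<delta>"
        proof -
          have "\<bar>\<sigma> / real N\<bar> \<le> - u / real N" using s s1 N1 by (simp add: divide_right_mono)
          then show ?thesis using Nd by simp
        qed
        then have "norm (A (\<sigma> / real N + t) - A t) \<le> \<epsilon>" using d(2) by fastforce
        then show "norm (A (\<sigma> / real N + t) - A t) * norm (Psi t \<sigma> u) \<le> \<epsilon> * R"
          using R s e by (intro mult_mono) auto
      qed
      then have "norm (Psi0 N t 0 u - Psi t 0 u) \<le> sqrt (exp ((2*K+1)*(0-u)) * (0-u)) * (\<epsilon>*R)"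
        by (rule sq_bound_sqrt) (use u e R0 in auto)
      then show "norm (Psi0 N t 0 u - Psi t 0 u) \<le> Cst * \<epsilon>" by (simp add: Cst_def algebra_simps)
    qed
  qed
qed

lemma conv_s:
  fixes A :: "real \<Rightarrow> real^'p^'p"
  assumes fl: "\<And>s. is_flow (\<lambda>_. A s) (Psi s)" and cA: "continuous_on UNIV A" and u: "u \<le> 0"
  shows "((\<lambda>s. Psi s 0 u) \<longlongrightarrow> Psi t 0 u) (at t)"
proof -
  obtain K where K: "\<forall>x\<in>{t-1..t+1}. norm (A x) \<le> K" using cont_bound[OF cA] by blast
  obtain R where R: "\<forall>\<sigma>\<in>{u..0}. norm (Psi t \<sigma> u) \<le> R" using flow_bound[OF fl] by blast
  have R0: "0 \<le> R" using R u by (meson atLeastAtMost_iff norm_ge_zero order.trans order_refl)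
  define Cst where "Cst = sqrt (exp ((2*K+1)*(0-u)) * (0-u)) * R"
  show ?thesis
  proof (rule tendsto_by_eps[where Cst=Cst])
    show "0 \<le> Cst" unfolding Cst_def using u R0 by (intro mult_nonneg_nonneg real_sqrt_ge_zero) auto
  next
    fix \<epsilon> :: real assume e: "0 < \<epsilon>"
    obtain \<delta> where d: "\<delta> > 0" "\<And>x. \<bar>x - t\<bar> < \<delta> \<Longrightarrow> norm (A x - A t) < \<epsilon>"
      using cont_eps[OF cA e] by blast
    show "eventually (\<lambda>s. norm (Psi s 0 u - Psi t 0 u) \<le> Cst * \<epsilon>) (at t)"
      unfolding eventually_at
    proof (intro exI[of _ "min 1 \<delta>"] conjI ballI impI)
      show "0 < min 1 \<delta>" using d by simp
      fix s :: real assume "s \<in> UNIV" and s: "s \<noteq> t \<and> dist s t < min 1 \<delta>"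
      then have st: "\<bar>s - t\<bar> < 1" "\<bar>s - t\<bar> < \<delta>" by (auto simp: dist_real_def)
      have "(norm (Psi s 0 u - Psi t 0 u))^2 \<le> exp ((2*K+1)*(0-u)) * ((\<epsilon>*R)^2*(0-u))"
      proof (rule flow_conv[OF fl fl u])
        fix \<sigma> assume s': "\<sigma> \<in> {u..0}"
        have "s \<in> {t-1..t+1}" using st by auto
        then show "norm (A s) \<le> K" using K by blast
        have "norm (A s - A t) \<le> \<epsilon>" using d(2) st by fastforce
        then show "norm (A s - A t) * norm (Psi t \<sigma> u) \<le> \<epsilon> * R"
          using R s' e by (intro mult_mono) auto
      qed
      then have "norm (Psi s 0 u - Psi t 0 u) \<le> sqrt (exp ((2*K+1)*(0-u)) * (0-u)) * (\<epsilon>*R)"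
        by (rule sq_bound_sqrt) (use u e R0 in auto)
      then show "norm (Psi s 0 u - Psi t 0 u) \<le> Cst * \<epsilon>" by (simp add: Cst_def algebra_simps)
    qed
  qed
qed


lemma semigroup:
  assumes fl: "is_flow (\<lambda>_. A0) X" and v: "0 \<le> v" and T: "0 \<le> T"
  shows "X 0 (-(v+T)) = X 0 (-T) ** X 0 (-v)"
proof -
  have "X 0 (-(v+T)) = X 0 (-T) ** X (-T) (-(v+T))" by (rule flow_comp[OF fl]) (use v T in auto)
  also have "X (-T) (-(v+T)) = X v 0" using flow_shift[OF fl, of "-(v+T)" "-T"] v by simp
  also have "X v 0 = X 0 (-v)" using flow_shift[OF fl, of "-v" 0] v by simp
  finally show ?thesis .
qed

lemma small_T:
  fixes G :: "real \<Rightarrow> real" and P :: "real \<Rightarrow> 'a::real_normed_vector"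
  assumes L2: "integrable lborel (\<lambda>v. indicator {0..} v * (G v)\<^sup>2)"
    and bnd: "\<And>v. v \<ge> 0 \<Longrightarrow> norm (P v) \<le> G v" and e: "0 < e"
  shows "\<exists>T\<ge>0. norm (P T) < e"
proof (rule ccontr)
  assume "\<not> ?thesis"
  then have ge: "e \<le> G v" if "v \<ge> 0" for v using bnd[OF that] that by force
  have meas: "(\<lambda>v::real. indicator {0..} v * e\<^sup>2) \<in> borel_measurable lborel"
    by (intro borel_measurable_times borel_measurable_indicator borel_measurable_const) (auto intro: borel_closed)
  have ae: "AE x in lborel. norm (indicator {0..} x * e\<^sup>2) \<le> norm (indicator {0..} x * (G x)\<^sup>2)"
  proof (rule AE_I2)
    fix x :: real
    show "norm (indicator {0..} x * e\<^sup>2) \<le> norm (indicator {0..} x * (G x)\<^sup>2)"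
      using ge[of x] e by (auto simp: indicator_def intro!: power_mono)
  qed
  have "integrable lborel (\<lambda>v::real. indicator {0..} v * e\<^sup>2)"
    using Bochner_Integration.integrable_bound[OF L2 meas ae] .
  then have "integrable lborel (indicator {0..} :: real \<Rightarrow> real)"
    using e by simp
  then have fin: "emeasure lborel {0::real..} < \<infinity>" by (simp add: integrable_indicator_iff)
  then obtain m where m: "emeasure lborel {0::real..} = ennreal m" "0 \<le> m"
    by (cases "emeasure lborel {0::real..}") auto
  have "emeasure lborel {0::real..m+1} \<le> emeasure lborel {0::real..}"
    by (rule emeasure_mono) auto
  then have "ennreal (m+1) \<le> ennreal m" using m by simp
  then show False using m by (simp add: ennreal_le_iff)
qed

lemma unif_decay:
  fixes A :: "real \<Rightarrow> real^'p^'p" and G :: "real \<Rightarrow> real"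
  assumes fl: "\<And>s. is_flow (\<lambda>_. A s) (Psi s)" and cA: "continuous_on UNIV A"
    and L2: "integrable lborel (\<lambda>v. indicator {0..} v * (G v)\<^sup>2)"
    and bnd: "\<And>v. v \<ge> 0 \<Longrightarrow> norm (Psi t 0 (-v)) \<le> G v"
  shows "\<exists>\<delta>>0. \<exists>G0 lam. lam > 0 \<and> (\<forall>s. \<bar>s - t\<bar> < \<delta> \<longrightarrow> (\<forall>v\<ge>0. norm (Psi s 0 (-v)) \<le> G0 * exp (- lam * v)))"
proof -
  obtain T where T0: "T \<ge> 0" and T: "norm (Psi t 0 (-T)) < 1/4"
    using small_T[OF L2, of "\<lambda>v. Psi t 0 (-v)" "1/4"] bnd by auto
  have Tpos: "T > 0"
  proof (rule ccontr)
    assume "\<not> T > 0" then have "T = 0" using T0 by simp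
    then show False using T norm_mat1[where 'n='p] flowD(1)[OF fl[of t], of 0] by simp
  qed
  have "eventually (\<lambda>s. dist (Psi s 0 (-T)) (Psi t 0 (-T)) < 1/4) (at t)"
    using conv_s[OF fl cA, of "-T" t] T0 by (intro tendstoD) auto
  then obtain \<delta>1 where d1: "\<delta>1 > 0" "\<And>s. s \<noteq> t \<Longrightarrow> dist s t < \<delta>1 \<Longrightarrow> dist (Psi s 0 (-T)) (Psi t 0 (-T)) < 1/4"
    unfolding eventually_at by auto
  define \<delta> where "\<delta> = min 1 \<delta>1"
  have half: "norm (Psi s 0 (-T)) \<le> 1/2" if "\<bar>s - t\<bar> < \<delta>" for s
  proof (cases "s = t")
    case True then show ?thesis using T by simp
  next
    case False
    then have "dist (Psi s 0 (-T)) (Psi t 0 (-T)) < 1/4" using d1 that by (auto simp: \<delta>_def dist_real_def)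
    then show ?thesis using T norm_triangle_ineq2[of "Psi s 0 (-T)" "Psi t 0 (-T)"] by (simp add: dist_norm)
  qed
  obtain KA where KA: "\<forall>x\<in>{t-1..t+1}. norm (A x) \<le> KA" using cont_bound[OF cA] by blast
  have "norm (A t) \<le> KA" using KA by auto
  then have KA0: "0 \<le> KA" by (meson norm_ge_zero order_trans)
  define K2 where "K2 = sqrt (exp ((2*KA+1)*T)) * norm (mat 1 :: real^'p^'p)"
  have K20: "0 \<le> K2" by (simp add: K2_def)
  have grow: "norm (Psi s 0 (-w)) \<le> K2" if "\<bar>s - t\<bar> < \<delta>" "0 \<le> w" "w \<le> T" for s w
  proof -
    have "(norm (Psi s 0 (-w)))^2 \<le> exp ((2*KA+1)*(0-(-w))) * (norm (mat 1 :: real^'p^'p))^2"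
    proof (rule flow_growth[OF fl])
      show "- w \<le> 0" using that by simp
      fix \<sigma>
      have "s \<in> {t-1..t+1}" using that by (auto simp: \<delta>_def)
      then show "norm (A s) \<le> KA" using KA by blast
    qed
    also have "\<dots> \<le> exp ((2*KA+1)*T) * (norm (mat 1 :: real^'p^'p))^2"
      using that KA0 by (intro mult_right_mono) (auto intro!: mult_left_mono)
    also have "\<dots> = K2^2" by (simp add: K2_def power_mult_distrib)
    finally show ?thesis using K20 by (rule power2_le_imp_le)
  qed
  have ind: "norm (Psi s 0 (-(w + real n * T))) \<le> K2 * (1/2)^n"
    if s: "\<bar>s - t\<bar> < \<delta>" and w: "0 \<le> w" "w \<le> T" for s n w
    using w
  proof (induction n arbitrary: w)
    case 0 then show ?case using grow[OF s] by simp
  next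
    case (Suc n)
    have e: "Psi s 0 (-(w + real (Suc n) * T)) = Psi s 0 (-T) ** Psi s 0 (-(w + real n * T))"
      using semigroup[OF fl[of s], of "w + real n * T" T] Suc.prems T0 by (simp add: algebra_simps)
    have "norm (Psi s 0 (-(w + real (Suc n) * T))) \<le> norm (Psi s 0 (-T)) * norm (Psi s 0 (-(w + real n * T)))"
      unfolding e by (rule norm_mm)
    also have "\<dots> \<le> (1/2) * (K2 * (1/2)^n)"
      using half[OF s] Suc.IH[OF Suc.prems] by (intro mult_mono) auto
    finally show ?case by simp
  qed
  define lam where "lam = ln 2 / T"
  have lam: "lam > 0" using Tpos by (simp add: lam_def)
  have fin: "norm (Psi s 0 (-v)) \<le> (2*K2) * exp (- lam * v)" if s: "\<bar>s - t\<bar> < \<delta>" and v: "0 \<le> v" for s v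
  proof -
    define n where "n = nat \<lfloor>v / T\<rfloor>"
    have n1: "real n \<le> v / T" using v Tpos by (simp add: n_def)
    have n2: "v / T < real n + 1" using v Tpos by (simp add: n_def)
    define w where "w = v - real n * T"
    have w: "0 \<le> w" "w \<le> T" using n1 n2 Tpos by (auto simp: w_def field_simps)
    have "norm (Psi s 0 (-v)) \<le> K2 * (1/2)^n" using ind[OF s w, of n] by (simp add: w_def)
    also have "(1/2::real)^n = exp (- ln 2 * real n)"
    proof -
      have "exp (real n * ln 2) = 2^n" by (simp add: exp_of_nat_mult)
      have a: "exp (- ln 2 * real n) = inverse (exp (real n * ln 2))"
        by (simp only: exp_minus[symmetric]) (simp add: algebra_simps)
      have b: "(1/2::real)^n = inverse (2^n)" by (simp add: power_one_over inverse_eq_divide)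
      show ?thesis unfolding a b \<open>exp (real n * ln 2) = 2^n\<close> ..
    qed
    also have "exp (- ln 2 * real n) \<le> exp (ln 2 - lam * v)"
    proof -
      have "lam * v = ln 2 * (v / T)" by (simp add: lam_def)
      moreover have "ln 2 * (v / T - 1) \<le> ln 2 * real n" using n2 by (intro mult_left_mono) auto
      ultimately have "- ln 2 * real n \<le> ln 2 - lam * v" by (simp add: algebra_simps)
      then show ?thesis by simp
    qed
    also have "exp (ln 2 - lam * v) = 2 * exp (- lam * v)" by (simp add: exp_diff exp_minus divide_inverse)
    finally show ?thesis using K20 by (simp add: mult_left_mono mult.assoc)
  qed
  show ?thesis
    by (intro exI[of _ \<delta>] exI[of _ "2*K2"] exI[of _ lam] conjI lam allI impI)
       (use fin d1 in \<open>auto simp: \<delta>_def\<close>)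
qed


lemma kern_meas:
  fixes P :: "real \<Rightarrow> real^'p^'p" and Cf :: "real \<Rightarrow> real^'p" and b :: "real^'p"
  assumes P: "continuous_on {..0} P" and Cf: "continuous_on UNIV Cf"
  shows "(\<lambda>v. if v \<ge> 0 then b \<bullet> (P (-v) *v Cf v) else 0) \<in> borel_measurable lborel"
proof -
  have c1: "continuous_on {0..} (\<lambda>v. P (-v))"
    by (rule continuous_on_compose2[OF P]) (auto intro!: continuous_intros)
  have c2: "continuous_on {0..} (\<lambda>v. P (-v) *v Cf v)"
    by (rule bounded_bilinear.continuous_on[OF bb_mv c1]) (rule continuous_on_subset[OF Cf], simp)
  have c3: "continuous_on {0..} (\<lambda>v. b \<bullet> (P (-v) *v Cf v))"
    by (intro continuous_on_inner continuous_on_const c2)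
  have "(\<lambda>v. indicator {0..} v *\<^sub>R (b \<bullet> (P (-v) *v Cf v))) \<in> borel_measurable borel"
    by (rule borel_measurable_continuous_on_indicator[OF _ c3]) (auto intro: borel_closed)
  moreover have "(\<lambda>v. indicator {0..} v *\<^sub>R (b \<bullet> (P (-v) *v Cf v))) = (\<lambda>v::real. if v \<ge> 0 then b \<bullet> (P (-v) *v Cf v) else 0)"
    by (auto simp: indicator_def)
  ultimately show ?thesis by simp
qed

lemma dct_sq:
  fixes f :: "nat \<Rightarrow> real \<Rightarrow> real" and h W :: "real \<Rightarrow> real"
  assumes fm: "\<And>i. f i \<in> borel_measurable lborel" and hm: "h \<in> borel_measurable lborel"
    and W: "integrable lborel (\<lambda>x. (W x)\<^sup>2)"
    and lim: "\<And>x. (\<lambda>i. f i x) \<longlonglongrightarrow> h x"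
    and bf: "\<And>i x. \<bar>f i x\<bar> \<le> W x" and bh: "\<And>x. \<bar>h x\<bar> \<le> W x"
  shows "(\<lambda>i. LINT x|lborel. (f i x - h x)\<^sup>2) \<longlonglongrightarrow> 0"
proof -
  have a: "(\<lambda>x. 0::real) \<in> borel_measurable lborel" by simp
  have b: "\<And>i. (\<lambda>x. (f i x - h x)\<^sup>2) \<in> borel_measurable lborel" using fm hm by measurable
  have c: "integrable lborel (\<lambda>x. 4 * (W x)\<^sup>2)" using W by simp
  have d: "AE x in lborel. (\<lambda>i. (f i x - h x)\<^sup>2) \<longlonglongrightarrow> 0"
  proof (rule AE_I2)
    fix x
    have "(\<lambda>i. (f i x - h x)\<^sup>2) \<longlonglongrightarrow> (h x - h x)\<^sup>2" by (intro tendsto_intros lim)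
    then show "(\<lambda>i. (f i x - h x)\<^sup>2) \<longlonglongrightarrow> 0" by simp
  qed
  have e: "\<And>i. AE x in lborel. norm ((f i x - h x)\<^sup>2) \<le> 4 * (W x)\<^sup>2"
  proof (rule AE_I2)
    fix i x
    have "\<bar>f i x - h x\<bar> \<le> 2 * W x" using bf[of i x] bh[of x] by linarith
    then have "(f i x - h x)\<^sup>2 \<le> (2 * W x)\<^sup>2"
      by (metis abs_ge_zero order.trans power2_abs power_mono)
    then show "norm ((f i x - h x)\<^sup>2) \<le> 4 * (W x)\<^sup>2" by (simp add: power_mult_distrib)
  qed
  from Bochner_Integration.integral_dominated_convergence[OF a b c d e]
  show ?thesis by simp
qed

lemma exp_sq: "(exp (x::real))\<^sup>2 = exp (2 * x)"
proof -
  have "exp (2 * x) = exp (x + x)" by simp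
  also have "\<dots> = exp x * exp x" by (rule exp_add)
  finally show ?thesis by (simp add: power2_eq_square)
qed


lemma L2_from_bound:
  fixes f W :: "real \<Rightarrow> real"
  assumes "f \<in> borel_measurable lborel" "integrable lborel (\<lambda>x. (W x)\<^sup>2)" "\<And>x. \<bar>f x\<bar> \<le> W x"
  shows "L2_real f"
  unfolding L2_real_def
proof
  show "f \<in> borel_measurable lborel" by fact
  show "integrable lborel (\<lambda>x. (f x)\<^sup>2)"
  proof (rule Bochner_Integration.integrable_bound[OF assms(2)])
    show "(\<lambda>x. (f x)\<^sup>2) \<in> borel_measurable lborel" using assms(1) by measurable
    show "AE x in lborel. norm ((f x)\<^sup>2) \<le> norm ((W x)\<^sup>2)"
    proof (rule AE_I2)
      fix x
      have "(f x)\<^sup>2 \<le> (W x)\<^sup>2" using assms(3)[of x]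
        by (metis abs_ge_zero order.trans power2_abs power_mono)
      then show "norm ((f x)\<^sup>2) \<le> norm ((W x)\<^sup>2)" by simp
    qed
  qed
qed

lemma kern_bound:
  fixes b :: "real^'p" and P :: "real^'p^'p"
  assumes "norm b \<le> Bb" "norm P \<le> Pb" "norm c \<le> Cb"
  shows "\<bar>b \<bullet> (P *v c)\<bar> \<le> Bb * Cb * Pb"
proof -
  have B0: "0 \<le> Bb" using assms(1) by (meson norm_ge_zero order_trans)
  have P0: "0 \<le> Pb" using assms(2) by (meson norm_ge_zero order_trans)
  have "\<bar>b \<bullet> (P *v c)\<bar> \<le> norm b * norm P * norm c" by (rule inner_mv_bound)
  also have "norm b * norm P * norm c \<le> Bb * Pb * Cb"
    using assms B0 P0 by (intro mult_mono) auto
  finally show ?thesis by (simp add: algebra_simps)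
qed

theorem proposition4:
  fixes A :: "real \<Rightarrow> real^'p^'p"
    and B C :: "real \<Rightarrow> real^'p"
    and Psi0 :: "nat \<Rightarrow> real \<Rightarrow> real \<Rightarrow> real \<Rightarrow> real^'p^'p"
    and Psi :: "real \<Rightarrow> real \<Rightarrow> real \<Rightarrow> real^'p^'p"
    and F :: "real \<Rightarrow> real \<Rightarrow> real"
  assumes Psi0_init: "\<And>N t s0. N \<ge> 1 \<Longrightarrow> Psi0 N t s0 s0 = mat 1"
    and Psi0_ode: "\<And>N t s s0. N \<ge> 1 \<Longrightarrow>
          ((\<lambda>s. Psi0 N t s s0) has_vector_derivative (A (s / real N + t) ** Psi0 N t s s0)) (at s)"
    and Psi_init: "\<And>t s0. Psi t s0 s0 = mat 1"
    and Psi_ode: "\<And>t s s0. ((\<lambda>s. Psi t s s0) has_vector_derivative (A t ** Psi t s s0)) (at s)"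
    and C1: "continuous_on UNIV A" "continuous_on UNIV B" "continuous_on UNIV C"
    and C2: "bounded (range C)"
    and C3_meas: "\<And>t. F t \<in> borel_measurable lborel"
    and C3_L2: "\<And>t. set_integrable lborel {..0} (\<lambda>u. (F t u)\<^sup>2)"
    and C3_bound: "\<And>t u N. u \<le> 0 \<Longrightarrow> N \<ge> 1 \<Longrightarrow> norm (Psi0 N t 0 u) \<le> F t u"
  shows "locally_stationary_kernels (tv_kernel B C Psi0) (lim_kernel B C Psi)"
proof -
  note cA = C1(1)
  have fl0: "is_flow (\<lambda>s. A (s / real N + t)) (Psi0 N t)" if N: "N \<ge> 1" for N t
  proof -
    have "continuous_on UNIV (\<lambda>s. A (s / real N + t))"
      by (rule continuous_on_compose2[OF cA]) (use N in \<open>auto intro!: continuous_intros\<close>)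
    then show ?thesis unfolding is_flow_def using Psi0_init[OF N] Psi0_ode[OF N] by blast
  qed
  have fl: "is_flow (\<lambda>_. A t) (Psi t)" for t
    unfolding is_flow_def using Psi_init Psi_ode continuous_on_const by blast
  obtain Cb where Cb: "\<And>x. norm (C x) \<le> Cb" using C2 unfolding bounded_iff by blast
  have Cb0: "0 \<le> Cb" using Cb[of 0] by (meson norm_ge_zero order_trans)
  have isB: "isCont B x" for x using C1(2) by (simp add: continuous_on_eq_continuous_at)
  have isC: "isCont C x" for x using C1(3) by (simp add: continuous_on_eq_continuous_at)
  have Fint: "integrable lborel (\<lambda>v. indicator {0..} v * (F t (- v))\<^sup>2)" for t
    by (rule refl_integrable[OF C3_L2])
  have conv: "(\<lambda>N. Psi0 N t 0 u) \<longlonglongrightarrow> Psi t 0 u" if "u \<le> 0" for t u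
    by (rule conv0[OF fl0 fl cA that])
  have Psibnd: "norm (Psi t 0 u) \<le> F t u" if u: "u \<le> 0" for t u
  proof (rule LIMSEQ_le_const2[OF tendsto_norm[OF conv[OF u]]])
    show "\<exists>N. \<forall>n\<ge>N. norm (Psi0 n t 0 u) \<le> F t u" using C3_bound u by blast
  qed
  have tvk: "tv_kernel B C Psi0 N t = (\<lambda>v. if 0 \<le> v then B t \<bullet> (Psi0 N t 0 (-v) *v C (t - v / real N)) else 0)" for N t
    by (simp add: tv_kernel_def fun_eq_iff)
  have lk: "lim_kernel B C Psi t = (\<lambda>v. if 0 \<le> v then B t \<bullet> (Psi t 0 (-v) *v C t) else 0)" for t
    by (simp add: lim_kernel_def fun_eq_iff)
  define W where "W t v = indicator {0..} v * (norm (B t) * Cb * F t (- v))" for t v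
  have Wint: "integrable lborel (\<lambda>v. (W t v)\<^sup>2)" for t
  proof -
    have "integrable lborel (\<lambda>v. (norm (B t) * Cb)\<^sup>2 * (indicator {0..} v * (F t (- v))\<^sup>2))"
      using Fint[of t] by simp
    moreover have "(\<lambda>v. (norm (B t) * Cb)\<^sup>2 * (indicator {0..} v * (F t (- v))\<^sup>2)) = (\<lambda>v. (W t v)\<^sup>2)"
      by (auto simp: W_def indicator_def power_mult_distrib fun_eq_iff)
    ultimately show ?thesis by simp
  qed
  have tv_meas: "tv_kernel B C Psi0 N t \<in> borel_measurable lborel" if N: "N \<ge> 1" for N t
    unfolding tvk
  proof (rule kern_meas)
    show "continuous_on {..0} (Psi0 N t 0)" by (rule flow_cont[OF fl0[OF N]])
    show "continuous_on UNIV (\<lambda>v. C (t - v / real N))"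
      by (rule continuous_on_compose2[OF C1(3)]) (use N in \<open>auto intro!: continuous_intros\<close>)
  qed
  have lk_meas: "lim_kernel B C Psi t \<in> borel_measurable lborel" for t
    unfolding lk
  proof (rule kern_meas)
    show "continuous_on {..0} (Psi t 0)" by (rule flow_cont[OF fl])
  qed (rule continuous_on_const)
  have tv_bnd: "\<bar>tv_kernel B C Psi0 N t v\<bar> \<le> W t v" if N: "N \<ge> 1" for N t v
  proof (cases "0 \<le> v")
    case True
    have "\<bar>B t \<bullet> (Psi0 N t 0 (-v) *v C (t - v / real N))\<bar> \<le> norm (B t) * Cb * F t (-v)"
      by (rule kern_bound) (use C3_bound[OF _ N, of "-v" t] True Cb in auto)
    then show ?thesis using True by (simp add: tvk W_def)
  next
    case False then show ?thesis by (simp add: tvk W_def)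
  qed
  have lk_bnd: "\<bar>lim_kernel B C Psi t v\<bar> \<le> W t v" for t v
  proof (cases "0 \<le> v")
    case True
    have "\<bar>B t \<bullet> (Psi t 0 (-v) *v C t)\<bar> \<le> norm (B t) * Cb * F t (-v)"
      by (rule kern_bound) (use Psibnd[of "-v" t] True Cb in auto)
    then show ?thesis using True by (simp add: lk W_def)
  next
    case False then show ?thesis by (simp add: lk W_def)
  qed
  have P1: "\<forall>N t. N \<ge> 1 \<longrightarrow> L2_real (tv_kernel B C Psi0 N t)"
    using L2_from_bound[OF tv_meas Wint tv_bnd] by blast
  have P2: "\<forall>t. L2_real (lim_kernel B C Psi t)"
    using L2_from_bound[OF lk_meas Wint lk_bnd] by blast
  have P4: "(\<lambda>N. L2_dist_sq (tv_kernel B C Psi0 N t) (lim_kernel B C Psi t)) \<longlonglongrightarrow> 0" for t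
  proof -
    have "(\<lambda>i. LINT v|lborel. (tv_kernel B C Psi0 (Suc i) t v - lim_kernel B C Psi t v)\<^sup>2) \<longlonglongrightarrow> 0"
    proof (rule dct_sq[OF tv_meas lk_meas Wint])
      fix v
      show "(\<lambda>i. tv_kernel B C Psi0 (Suc i) t v) \<longlonglongrightarrow> lim_kernel B C Psi t v"
      proof (cases "0 \<le> v")
        case True
        have p1: "(\<lambda>i. Psi0 (Suc i) t 0 (-v)) \<longlonglongrightarrow> Psi t 0 (-v)"
          using LIMSEQ_Suc[OF conv[of "-v" t]] True by simp
        have "(\<lambda>i. v / real (Suc i)) \<longlonglongrightarrow> 0"
          using LIMSEQ_Suc[OF lim_const_over_n[of v]] by simp
        then have "(\<lambda>i. t - v / real (Suc i)) \<longlonglongrightarrow> t"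
          using tendsto_diff[OF tendsto_const[of t]] by fastforce
        then have p2: "(\<lambda>i. C (t - v / real (Suc i))) \<longlonglongrightarrow> C t"
          by (rule isCont_tendsto_compose[OF isC])
        have "(\<lambda>i. B t \<bullet> (Psi0 (Suc i) t 0 (-v) *v C (t - v / real (Suc i)))) \<longlonglongrightarrow> B t \<bullet> (Psi t 0 (-v) *v C t)"
          by (intro tendsto_inner tendsto_const bounded_bilinear.tendsto[OF bb_mv p1 p2])
        then show ?thesis using True by (simp add: tvk lk)
      next
        case False then show ?thesis by (simp add: tvk lk)
      qed
    qed (auto intro: tv_bnd lk_bnd)
    then have "(\<lambda>i. L2_dist_sq (tv_kernel B C Psi0 (Suc i) t) (lim_kernel B C Psi t)) \<longlonglongrightarrow> 0"
      by (simp add: L2_dist_sq_def)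
    then show ?thesis by (rule LIMSEQ_imp_Suc)
  qed
  have P3: "((\<lambda>s. L2_dist_sq (lim_kernel B C Psi s) (lim_kernel B C Psi t)) \<longlongrightarrow> 0) (at t)" for t
  proof -
    have bnd': "norm (Psi t 0 (-v)) \<le> F t (-v)" if "v \<ge> 0" for v using Psibnd[of "-v" t] that by simp
    obtain \<delta> G0 lam where d: "\<delta> > 0" "lam > 0"
      and dec: "\<And>s v. \<bar>s - t\<bar> < \<delta> \<Longrightarrow> v \<ge> 0 \<Longrightarrow> norm (Psi s 0 (-v)) \<le> G0 * exp (- lam * v)"
      using unif_decay[where G="\<lambda>v. F t (-v)" and t=t, OF fl cA Fint bnd'] by blast
    obtain Bm where Bm: "\<forall>s\<in>{t-1..t+1}. norm (B s) \<le> Bm" using cont_bound[OF C1(2)] by blast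
    define \<delta>' where "\<delta>' = min 1 \<delta>"
    define Wd where "Wd v = indicator {0..} v * (Bm * Cb * (G0 * exp (- lam * v)))" for v
    have Wd_bnd: "\<bar>lim_kernel B C Psi s v\<bar> \<le> Wd v" if s: "\<bar>s - t\<bar> < \<delta>'" for s v
    proof (cases "0 \<le> v")
      case True
      have "s \<in> {t-1..t+1}" using s by (auto simp: \<delta>'_def)
      then have "norm (B s) \<le> Bm" using Bm by blast
      moreover have "norm (Psi s 0 (-v)) \<le> G0 * exp (- lam * v)" using dec[of s v] s True by (simp add: \<delta>'_def)
      ultimately have "\<bar>B s \<bullet> (Psi s 0 (-v) *v C s)\<bar> \<le> Bm * Cb * (G0 * exp (- lam * v))"
        using Cb by (intro kern_bound) auto
      then show ?thesis using True by (simp add: lk Wd_def)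
    next
      case False then show ?thesis by (simp add: lk Wd_def)
    qed
    have Wd_int: "integrable lborel (\<lambda>v. (Wd v)\<^sup>2)"
    proof -
      have int: "integrable lborel (\<lambda>v. (Bm * Cb * G0)\<^sup>2 * (indicator {0..} v * exp (- (2 * lam) * v)))"
        using exp_integrable[of "2 * lam"] d by (intro integrable_mult_right) simp
      have eq: "(\<lambda>v. (Bm * Cb * G0)\<^sup>2 * (indicator {0..} v * exp (- (2 * lam) * v))) = (\<lambda>v. (Wd v)\<^sup>2)"
      proof
        fix v :: real
        have "(exp (- lam * v))\<^sup>2 = exp (- (2 * lam) * v)" by (simp add: exp_sq)
        then show "(Bm * Cb * G0)\<^sup>2 * (indicator {0..} v * exp (- (2 * lam) * v)) = (Wd v)\<^sup>2"
          by (auto simp: Wd_def indicator_def power_mult_distrib)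
      qed
      show ?thesis using int unfolding eq .
    qed
    have ptw: "((\<lambda>s. lim_kernel B C Psi s v) \<longlongrightarrow> lim_kernel B C Psi t v) (at t)" for v
    proof (cases "0 \<le> v")
      case True
      have "((\<lambda>s. B s \<bullet> (Psi s 0 (-v) *v C s)) \<longlongrightarrow> B t \<bullet> (Psi t 0 (-v) *v C t)) (at t)"
        using isB[of t] isC[of t] conv_s[OF fl cA, of "-v" t] True
        by (intro tendsto_inner bounded_bilinear.tendsto[OF bb_mv]) (auto simp: isCont_def)
      then show ?thesis using True by (simp add: lk)
    next
      case False then show ?thesis by (simp add: lk)
    qed
    show ?thesis
      unfolding tendsto_at_iff_sequentially
    proof (intro allI impI)
      fix X :: "nat \<Rightarrow> real" assume X: "\<forall>i. X i \<in> UNIV - {t}" and Xt: "X \<longlonglongrightarrow> t"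
      have dpos: "\<delta>' > 0" using d by (simp add: \<delta>'_def)
      from Xt[unfolded LIMSEQ_iff, rule_format, OF dpos]
      obtain i0 where i0: "\<And>i. i \<ge> i0 \<Longrightarrow> norm (X i - t) < \<delta>'" by blast
      have "(\<lambda>i. LINT v|lborel. (lim_kernel B C Psi (X (i + i0)) v - lim_kernel B C Psi t v)\<^sup>2) \<longlonglongrightarrow> 0"
      proof (rule dct_sq[OF lk_meas lk_meas Wd_int])
        fix v
        have Xs: "\<And>i. X (i + i0) \<in> UNIV - {t}" using X by blast
        have Xs2: "(\<lambda>i. X (i + i0)) \<longlonglongrightarrow> t" by (rule LIMSEQ_ignore_initial_segment[OF Xt])
        have "((\<lambda>s. lim_kernel B C Psi s v) \<circ> (\<lambda>i. X (i + i0))) \<longlonglongrightarrow> lim_kernel B C Psi t v"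
          by (rule ptw[of v, unfolded tendsto_at_iff_sequentially, rule_format, OF Xs Xs2])
        then show "(\<lambda>i. lim_kernel B C Psi (X (i + i0)) v) \<longlonglongrightarrow> lim_kernel B C Psi t v"
          by (simp add: o_def)
      next
        fix i v
        have "norm (X (i + i0) - t) < \<delta>'" by (rule i0) simp
        then show "\<bar>lim_kernel B C Psi (X (i + i0)) v\<bar> \<le> Wd v" by (intro Wd_bnd) simp
      next
        fix v
        show "\<bar>lim_kernel B C Psi t v\<bar> \<le> Wd v" using Wd_bnd d by (simp add: \<delta>'_def)
      qed
      then have "(\<lambda>i. ((\<lambda>s. L2_dist_sq (lim_kernel B C Psi s) (lim_kernel B C Psi t)) \<circ> X) (i + i0)) \<longlonglongrightarrow> 0"
        by (simp add: L2_dist_sq_def o_def)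
      then show "((\<lambda>s. L2_dist_sq (lim_kernel B C Psi s) (lim_kernel B C Psi t)) \<circ> X) \<longlonglongrightarrow> 0"
        by (rule LIMSEQ_offset)
    qed
  qed
  show ?thesis unfolding locally_stationary_kernels_def
    using P1 P2 P3 P4 by blast
qed

end
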